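(* Let $n\ge 3$ and let $\sigma$ be a maximal simplex of $\mathcal{VR}(\mathbb{I}_n;2)$. Then one of the following holds: (i) $\sigma = N[v]$ for some $v\in V(\mathbb{I}_n)$; (ii) $\sigma=\{v,v^{i_0},v^{j_0},v^{i_0,j_0}\}$ for some $v\in V(\mathbb{I}_n)$ and distinct $i_0,j_0\in[n]$; (iii) $\sigma = K_v^{i_0,j_0,k_0}$ for some $v\in V(\mathbb{I}_n)$ and distinct $i_0,j_0,k_0\in[n]$.
   Context: $\mathbb{I}_n$ is the $n$-dimensional hypercube graph on vertex set $\{0,1\}^n$ (adjacent iff differing in exactly one coordinate), with Hamming distance $d(v,w)=\#\{i: v(i)\ne w(i)\}$, where $v(i)$ is the $i$-th coordinate. $\mathcal{VR}(X;r)$ is the simplicial complex of finite subsets of the metric space $X$ of diameter at most $r$. $[n]=\{1,\dots,n\}$. For a vertex $v$ and distinct $i_1,\dots,i_k\in[n]$, $v^{i_1,\dots,i_k}$ is the vertex obtained from $v$ by changing coordinates $i_1,\dots,i_k$ (and only those). $N(v)=\{v^i:i\in[n]\}$ and $N[v]=N(v)\cup\{v\}$. For distinct $i,j,k\in[n]$, $K_v^{i,j,k}=\{v,v^{i,j},v^{j,k},v^{i,k}\}$. *)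

theory Defs
  imports Main "HOL-Library.FuncSet"
begin

definition cube_vertices :: "nat \<Rightarrow> (nat \<Rightarrow> bool) set" where
  "cube_vertices n = {1..n} \<rightarrow>\<^sub>E (UNIV :: bool set)"

definition hamming :: "nat \<Rightarrow> (nat \<Rightarrow> bool) \<Rightarrow> (nat \<Rightarrow> bool) \<Rightarrow> nat" where
  "hamming n v w = card {i \<in> {1..n}. v i \<noteq> w i}"

definition VR :: "'a set \<Rightarrow> ('a \<Rightarrow> 'a \<Rightarrow> 'b::linorder) \<Rightarrow> 'b \<Rightarrow> 'a set set" where
  "VR X d r = {\<sigma>. finite \<sigma> \<and> \<sigma> \<noteq> {} \<and> \<sigma> \<subseteq> X \<and> (\<forall>x\<in>\<sigma>. \<forall>y\<in>\<sigma>. d x y \<le> r)}"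

definition maximal_simplex :: "'a set set \<Rightarrow> 'a set \<Rightarrow> bool" where
  "maximal_simplex K \<sigma> \<longleftrightarrow> \<sigma> \<in> K \<and> (\<forall>\<tau>\<in>K. \<sigma> \<subseteq> \<tau> \<longrightarrow> \<tau> = \<sigma>)"

definition flip :: "(nat \<Rightarrow> bool) \<Rightarrow> nat set \<Rightarrow> (nat \<Rightarrow> bool)" where
  "flip v S = (\<lambda>i. if i \<in> S then \<not> v i else v i)"

definition closed_nbhd :: "nat \<Rightarrow> (nat \<Rightarrow> bool) \<Rightarrow> (nat \<Rightarrow> bool) set" where
  "closed_nbhd n v = insert v {flip v {i} | i. i \<in> {1..n}}"

definition Kv :: "(nat \<Rightarrow> bool) \<Rightarrow> nat \<Rightarrow> nat \<Rightarrow> nat \<Rightarrow> (nat \<Rightarrow> bool) set" where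
  "Kv v i j k = {v, flip v {i, j}, flip v {j, k}, flip v {i, k}}"

end

theory Submission imports Defs begin

lemma flip_cube: "v \<in> cube_vertices n \<Longrightarrow> A \<subseteq> {1..n} \<Longrightarrow> flip v A \<in> cube_vertices n"
  unfolding cube_vertices_def flip_def PiE_def extensional_def by auto

lemma cube_flip_D: "v \<in> cube_vertices n \<Longrightarrow> w \<in> cube_vertices n \<Longrightarrow> w = flip v {i\<in>{1..n}. v i \<noteq> w i}"
  by (auto simp: cube_vertices_def flip_def PiE_def extensional_def fun_eq_iff)

lemma ham_flip: "A \<subseteq> {1..n} \<Longrightarrow> B \<subseteq> {1..n} \<Longrightarrow> hamming n (flip v A) (flip v B) = card ((A-B) \<union> (B-A))"
  unfolding hamming_def by (rule arg_cong[where f=card]) (auto simp: flip_def)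

lemma flip_empty[simp]: "flip v {} = v" by (simp add: flip_def)

lemma flip_cc[simp]: "flip (flip v {c}) {c} = v" by (auto simp: flip_def fun_eq_iff)
lemma flip_cx: "x \<noteq> c \<Longrightarrow> flip v {c,x} = flip (flip v {c}) {x}" by (auto simp: flip_def fun_eq_iff)

lemma symd_le: "finite A \<Longrightarrow> finite B \<Longrightarrow> card ((A-B) \<union> (B-A)) \<le> card A + card B"
proof -
  assume "finite A" "finite B"
  have "card ((A-B) \<union> (B-A)) \<le> card (A-B) + card (B-A)" by (rule card_Un_le)
  also have "\<dots> \<le> card A + card B" using \<open>finite A\<close> \<open>finite B\<close> by (intro add_mono card_mono) auto
  finally show ?thesis .
qed

lemma VR_img:
  assumes "u \<in> cube_vertices n" "finite \<A>" "\<A> \<noteq> {}" "\<forall>A\<in>\<A>. A \<subseteq> {1..n}"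
    "\<forall>A\<in>\<A>. \<forall>B\<in>\<A>. card ((A-B) \<union> (B-A)) \<le> 2"
  shows "flip u ` \<A> \<in> VR (cube_vertices n) (hamming n) 2"
  using assms unfolding VR_def by (auto simp: ham_flip flip_cube)

lemma VR_N: assumes "u \<in> cube_vertices n"
  shows "closed_nbhd n u \<in> VR (cube_vertices n) (hamming n) 2"
proof -
  have "closed_nbhd n u = flip u ` insert {} ((\<lambda>i. {i}) ` {1..n})"
    unfolding closed_nbhd_def by auto
  moreover have "flip u ` insert {} ((\<lambda>i. {i}) ` {1..n}) \<in> VR (cube_vertices n) (hamming n) 2"
  proof (rule VR_img[OF assms])
    show "\<forall>A\<in>insert {} ((\<lambda>i. {i}) ` {1..n}). \<forall>B\<in>insert {} ((\<lambda>i. {i}) ` {1..n}). card ((A-B) \<union> (B-A)) \<le> 2"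
    proof (intro ballI)
      fix A B assume "A \<in> insert {} ((\<lambda>i. {i}) ` {1..n})" "B \<in> insert {} ((\<lambda>i. {i}) ` {1..n})"
      then have "finite A" "finite B" "card A \<le> 1" "card B \<le> 1" by auto
      then show "card ((A-B) \<union> (B-A)) \<le> 2" using symd_le[of A B] by linarith
    qed
  qed auto
  ultimately show ?thesis by simp
qed

lemma VR_sq: assumes "v \<in> cube_vertices n" "a \<in> {1..n}" "b \<in> {1..n}" "a \<noteq> b"
  shows "{v, flip v {a}, flip v {b}, flip v {a,b}} \<in> VR (cube_vertices n) (hamming n) 2"
proof -
  have "{v, flip v {a}, flip v {b}, flip v {a,b}} = flip v ` {{}, {a}, {b}, {a,b}}" by simp
  moreover have "flip v ` {{}, {a}, {b}, {a,b}} \<in> VR (cube_vertices n) (hamming n) 2"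
    by (rule VR_img[OF assms(1)]) (use assms in \<open>auto simp: insert_Diff_if\<close>)
  ultimately show ?thesis by simp
qed

lemma VR_K: assumes "v \<in> cube_vertices n" "a \<in> {1..n}" "b \<in> {1..n}" "c \<in> {1..n}" "a \<noteq> b" "b \<noteq> c" "a \<noteq> c"
  shows "Kv v a b c \<in> VR (cube_vertices n) (hamming n) 2"
proof -
  have "Kv v a b c = flip v ` {{}, {a,b}, {b,c}, {a,c}}" by (simp add: Kv_def)
  moreover have "flip v ` {{}, {a,b}, {b,c}, {a,c}} \<in> VR (cube_vertices n) (hamming n) 2"
    by (rule VR_img[OF assms(1)]) (use assms in \<open>auto simp: insert_Diff_if\<close>)
  ultimately show ?thesis by simp
qed

lemma classify:
  assumes Sc: "S \<subseteq> cube_vertices n" and vS: "v \<in> S"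
    and dS: "\<forall>x\<in>S. \<forall>y\<in>S. hamming n x y \<le> 2"
  shows "S \<subseteq> closed_nbhd n v
    \<or> (\<exists>c\<in>{1..n}. S \<subseteq> closed_nbhd n (flip v {c}))
    \<or> (\<exists>a\<in>{1..n}. \<exists>b\<in>{1..n}. a \<noteq> b \<and> S \<subseteq> {v, flip v {a}, flip v {b}, flip v {a,b}})
    \<or> (\<exists>a\<in>{1..n}. \<exists>b\<in>{1..n}. \<exists>c\<in>{1..n}. a \<noteq> b \<and> b \<noteq> c \<and> a \<noteq> c \<and> S \<subseteq> Kv v a b c)"
proof -
  have vc: "v \<in> cube_vertices n" using Sc vS by auto
  define P1 where "P1 a \<longleftrightarrow> a \<in> {1..n} \<and> flip v {a} \<in> S" for a
  define P2 where "P2 a b \<longleftrightarrow> a \<in> {1..n} \<and> b \<in> {1..n} \<and> a \<noteq> b \<and> flip v {a,b} \<in> S" for a b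
  have cls: "w = v \<or> (\<exists>a. P1 a \<and> w = flip v {a}) \<or> (\<exists>a b. P2 a b \<and> w = flip v {a,b})"
    if wS: "w \<in> S" for w
  proof -
    define D where "D = {i\<in>{1..n}. v i \<noteq> w i}"
    have wD: "w = flip v D" unfolding D_def using cube_flip_D[OF vc] Sc wS by auto
    have fD: "finite D" "D \<subseteq> {1..n}" unfolding D_def by auto
    have "card D \<le> 2" using dS vS wS unfolding D_def hamming_def by auto
    then have "card D = 0 \<or> card D = 1 \<or> card D = 2" by linarith
    then show ?thesis
    proof (elim disjE)
      assume "card D = 0" then have "D = {}" using fD by simp
      then show ?thesis using wD by simp
    next
      assume "card D = 1" then obtain a where "D = {a}" by (auto simp: card_1_singleton_iff)
      then show ?thesis using wD wS fD unfolding P1_def by auto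
    next
      assume "card D = 2" then obtain a b where "D = {a,b}" "a \<noteq> b" by (auto simp: card_2_iff)
      then show ?thesis using wD wS fD unfolding P2_def by auto
    qed
  qed
  have F1: "a = c \<or> a = d" if "P1 a" "P2 c d" for a c d
  proof (rule ccontr)
    assume na: "\<not> (a = c \<or> a = d)"
    have "hamming n (flip v {a}) (flip v {c,d}) \<le> 2" using dS that unfolding P1_def P2_def by auto
    moreover have "hamming n (flip v {a}) (flip v {c,d}) = card (({a} - {c,d}) \<union> ({c,d} - {a}))"
      using that unfolding P1_def P2_def by (intro ham_flip) auto
    moreover have "({a} - {c,d}) \<union> ({c,d} - {a}) = {a,c,d}" using na by auto
    moreover have "card {a,c,d} = 3" using na that unfolding P2_def by auto
    ultimately show False by simp
  qed
  have F2: "a = c \<or> a = d \<or> b = c \<or> b = d" if "P2 a b" "P2 c d" for a b c d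
  proof (rule ccontr)
    assume na: "\<not> (a = c \<or> a = d \<or> b = c \<or> b = d)"
    have "hamming n (flip v {a,b}) (flip v {c,d}) \<le> 2" using dS that unfolding P2_def by auto
    moreover have "hamming n (flip v {a,b}) (flip v {c,d}) = card (({a,b} - {c,d}) \<union> ({c,d} - {a,b}))"
      using that unfolding P2_def by (intro ham_flip) auto
    moreover have "({a,b} - {c,d}) \<union> ({c,d} - {a,b}) = {a,b,c,d}" using na by auto
    moreover have "card {a,b,c,d} = 4" using na that unfolding P2_def by auto
    ultimately show False by simp
  qed
  have P2s: "P2 b a" if "P2 a b" for a b using that unfolding P2_def by (auto simp: insert_commute)
  have P1r: "a \<in> {1..n}" if "P1 a" for a using that unfolding P1_def by auto
  have P2r: "a \<in> {1..n}" "b \<in> {1..n}" "a \<noteq> b" if "P2 a b" for a b using that unfolding P2_def by auto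
  have starN: "S \<subseteq> closed_nbhd n (flip v {c})"
    if cr: "c \<in> {1..n}" and h1: "\<forall>a. P1 a \<longrightarrow> a = c" and h2: "\<forall>a b. P2 a b \<longrightarrow> a = c \<or> b = c" for c
  proof
    fix w assume "w \<in> S"
    from cls[OF this] show "w \<in> closed_nbhd n (flip v {c})"
    proof (elim disjE exE conjE)
      assume "w = v" then show ?thesis using cr unfolding closed_nbhd_def by force
    next
      fix a assume "P1 a" "w = flip v {a}" then show ?thesis using h1 unfolding closed_nbhd_def by auto
    next
      fix a b assume p: "P2 a b" and w: "w = flip v {a,b}"
      show ?thesis
      proof (cases "a = c")
        case True
        then have "w = flip (flip v {c}) {b}" using w P2r[OF p] flip_cx by auto
        then show ?thesis using P2r[OF p] unfolding closed_nbhd_def by auto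
      next
        case False
        then have "b = c" using h2 p by auto
        then have "w = flip (flip v {c}) {a}" using w P2r[OF p] flip_cx[of a c v] False by (auto simp: insert_commute)
        then show ?thesis using P2r[OF p] unfolding closed_nbhd_def by auto
      qed
    qed
  qed
  show ?thesis
  proof (cases "\<exists>a. P1 a")
    case True
    then obtain a where pa: "P1 a" by blast
    show ?thesis
    proof (cases "\<forall>a'. P1 a' \<longrightarrow> a' = a")
      case True
      have h2: "\<forall>x y. P2 x y \<longrightarrow> x = a \<or> y = a" using F1[OF pa] by blast
      have "S \<subseteq> closed_nbhd n (flip v {a})" by (rule starN[OF P1r[OF pa] True h2])
      then have "\<exists>c\<in>{1..n}. S \<subseteq> closed_nbhd n (flip v {c})" using P1r[OF pa] by blast
      then show ?thesis by (rule disjI2[OF disjI1])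
    next
      case False
      then obtain a' where pa': "P1 a'" "a' \<noteq> a" by blast
      show ?thesis
      proof (cases "\<exists>x y. P2 x y")
        case False
        have "S \<subseteq> closed_nbhd n v"
        proof
          fix w assume "w \<in> S"
          from cls[OF this] show "w \<in> closed_nbhd n v" using False P1r unfolding closed_nbhd_def by auto
        qed
        then show ?thesis by (rule disjI1)
      next
        case True
        then obtain x0 y0 where p0: "P2 x0 y0" by blast
        have xy0: "{x0,y0} = {a,a'}" using F1[OF pa p0] F1[OF pa'(1) p0] pa'(2) P2r[OF p0] by auto
        have "S \<subseteq> {v, flip v {a}, flip v {a'}, flip v {a,a'}}"
        proof
          fix w assume "w \<in> S"
          from cls[OF this] show "w \<in> {v, flip v {a}, flip v {a'}, flip v {a,a'}}"
          proof (elim disjE exE conjE)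
            assume "w = v" then show ?thesis by simp
          next
            fix x assume px: "P1 x" and wx: "w = flip v {x}"
            have "x \<in> {x0,y0}" using F1[OF px p0] by blast
            then have "x \<in> {a,a'}" using xy0 by simp
            then have "x = a \<or> x = a'" by simp
            then show ?thesis using wx by blast
          next
            fix x y assume p: "P2 x y" and w: "w = flip v {x,y}"
            have "{x,y} = {a,a'}" using F1[OF pa p] F1[OF pa'(1) p] pa'(2) P2r[OF p] by auto
            then have "w = flip v {a,a'}" using w by simp
            then show ?thesis by blast
          qed
        qed
        then have "a \<noteq> a' \<and> S \<subseteq> {v, flip v {a}, flip v {a'}, flip v {a,a'}}" using pa'(2) by simp
        then have "\<exists>b\<in>{1..n}. a \<noteq> b \<and> S \<subseteq> {v, flip v {a}, flip v {b}, flip v {a,b}}"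
          using P1r[OF pa'(1)] by (rule bexI)
        then have "\<exists>a\<in>{1..n}. \<exists>b\<in>{1..n}. a \<noteq> b \<and> S \<subseteq> {v, flip v {a}, flip v {b}, flip v {a,b}}"
          using P1r[OF pa] by (rule bexI)
        then show ?thesis by (rule disjI2[OF disjI2[OF disjI1]])
      qed
    qed
  next
    case noA: False
    show ?thesis
    proof (cases "\<exists>c d. P2 c d")
      case False
      have "S \<subseteq> closed_nbhd n v"
      proof
        fix w assume "w \<in> S"
        from cls[OF this] show "w \<in> closed_nbhd n v" using noA False unfolding closed_nbhd_def by auto
      qed
      then show ?thesis by (rule disjI1)
    next
      case True
      then obtain c d where pcd: "P2 c d" by blast
      show ?thesis
      proof (cases "\<forall>x y. P2 x y \<longrightarrow> x = c \<or> y = c")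
        case True
        have "S \<subseteq> closed_nbhd n (flip v {c})" using starN[OF P2r(1)[OF pcd] _ True] noA by blast
        then have "\<exists>c\<in>{1..n}. S \<subseteq> closed_nbhd n (flip v {c})" using P2r(1)[OF pcd] by blast
        then show ?thesis by (rule disjI2[OF disjI1])
      next
        case False
        then obtain x y where pxy: "P2 x y" "x \<noteq> c" "y \<noteq> c" by blast
        obtain e where pde: "P2 d e" "e \<noteq> c"
        proof (cases "x = d")
          case True then show ?thesis using that pxy by auto
        next
          case False then have "y = d" using F2[OF pcd pxy(1)] pxy by auto
          then show ?thesis using that pxy P2s by auto
        qed
        show ?thesis
        proof (cases "\<forall>x y. P2 x y \<longrightarrow> x = d \<or> y = d")
          case True
          have "S \<subseteq> closed_nbhd n (flip v {d})" using starN[OF P2r(1)[OF pde(1)] _ True] noA by blast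
          then have "\<exists>c\<in>{1..n}. S \<subseteq> closed_nbhd n (flip v {c})" using P2r(1)[OF pde(1)] by blast
          then show ?thesis by (rule disjI2[OF disjI1])
        next
          case False
          then obtain p q where pq: "P2 p q" "p \<noteq> d" "q \<noteq> d" by blast
          have dist: "c \<noteq> d" "d \<noteq> e" "c \<noteq> e" using P2r pcd pde by auto
          have ce: "P2 c e"
          proof -
            have "{p,q} = {c,e}" using F2[OF pcd pq(1)] F2[OF pde(1) pq(1)] pq dist P2r(3)[OF pq(1)] by auto
            then show ?thesis using pq(1) unfolding P2_def by auto
          qed
          have "S \<subseteq> Kv v c d e"
          proof
            fix w assume "w \<in> S"
            from cls[OF this] show "w \<in> Kv v c d e"
            proof (elim disjE exE conjE)
              fix x y assume p: "P2 x y" and w: "w = flip v {x,y}"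
              have "{x,y} = {c,d} \<or> {x,y} = {d,e} \<or> {x,y} = {c,e}"
                using F2[OF pcd p] F2[OF pde(1) p] F2[OF ce p] dist P2r(3)[OF p] by auto
              then show ?thesis using w unfolding Kv_def by (auto simp: insert_commute)
            qed (use noA in \<open>auto simp: Kv_def\<close>)
          qed
          then have "\<exists>a\<in>{1..n}. \<exists>b\<in>{1..n}. \<exists>c\<in>{1..n}. a \<noteq> b \<and> b \<noteq> c \<and> a \<noteq> c \<and> S \<subseteq> Kv v a b c"
            using dist P2r(1,2)[OF pcd] P2r(2)[OF pde(1)] by blast
          then show ?thesis by (rule disjI2[OF disjI2[OF disjI2]])
        qed
      qed
    qed
  qed
qed


theorem mainTheorem4:
  fixes n :: nat and \<sigma> :: "(nat \<Rightarrow> bool) set"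
  assumes "n \<ge> 3"
    and "maximal_simplex (VR (cube_vertices n) (hamming n) 2) \<sigma>"
  shows "(\<exists>v \<in> cube_vertices n. \<sigma> = closed_nbhd n v)
       \<or> (\<exists>v \<in> cube_vertices n. \<exists>i0 \<in> {1..n}. \<exists>j0 \<in> {1..n}. i0 \<noteq> j0 \<and>
            \<sigma> = {v, flip v {i0}, flip v {j0}, flip v {i0, j0}})
       \<or> (\<exists>v \<in> cube_vertices n. \<exists>i0 \<in> {1..n}. \<exists>j0 \<in> {1..n}. \<exists>k0 \<in> {1..n}.
            i0 \<noteq> j0 \<and> j0 \<noteq> k0 \<and> i0 \<noteq> k0 \<and> \<sigma> = Kv v i0 j0 k0)"
proof -
  have sV: "\<sigma> \<in> VR (cube_vertices n) (hamming n) 2"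
    and mx: "\<And>\<tau>. \<tau> \<in> VR (cube_vertices n) (hamming n) 2 \<Longrightarrow> \<sigma> \<subseteq> \<tau> \<Longrightarrow> \<tau> = \<sigma>"
    using assms(2) unfolding maximal_simplex_def by auto
  have sc: "\<sigma> \<subseteq> cube_vertices n" "\<sigma> \<noteq> {}" "\<forall>x\<in>\<sigma>. \<forall>y\<in>\<sigma>. hamming n x y \<le> 2"
    using sV unfolding VR_def by auto
  obtain v where vs: "v \<in> \<sigma>" using sc(2) by blast
  have vc: "v \<in> cube_vertices n" using vs sc(1) by blast
  from classify[OF sc(1) vs sc(3)] show ?thesis
  proof (elim disjE bexE conjE)
    assume h: "\<sigma> \<subseteq> closed_nbhd n v"
    have "closed_nbhd n v = \<sigma>" by (rule mx[OF VR_N[OF vc] h])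
    then have "\<sigma> = closed_nbhd n v" by simp
    then have "\<exists>v \<in> cube_vertices n. \<sigma> = closed_nbhd n v" using vc by (rule bexI)
    then show ?thesis by (rule disjI1)
  next
    fix c assume c: "c \<in> {1..n}" and h: "\<sigma> \<subseteq> closed_nbhd n (flip v {c})"
    have uc: "flip v {c} \<in> cube_vertices n" using flip_cube[OF vc] c by auto
    have "closed_nbhd n (flip v {c}) = \<sigma>" by (rule mx[OF VR_N[OF uc] h])
    then have "\<sigma> = closed_nbhd n (flip v {c})" by simp
    then have "\<exists>v \<in> cube_vertices n. \<sigma> = closed_nbhd n v" using uc by (rule bexI)
    then show ?thesis by (rule disjI1)
  next
    fix a b assume ab: "a \<in> {1..n}" "b \<in> {1..n}" "a \<noteq> b" and h: "\<sigma> \<subseteq> {v, flip v {a}, flip v {b}, flip v {a,b}}"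
    have "{v, flip v {a}, flip v {b}, flip v {a,b}} = \<sigma>" by (rule mx[OF VR_sq[OF vc ab] h])
    then have "\<exists>v \<in> cube_vertices n. \<exists>i0 \<in> {1..n}. \<exists>j0 \<in> {1..n}. i0 \<noteq> j0 \<and>
            \<sigma> = {v, flip v {i0}, flip v {j0}, flip v {i0, j0}}"
      using vc ab by (intro bexI[of _ v] bexI[of _ a] bexI[of _ b] conjI) auto
    then show ?thesis by (rule disjI2[OF disjI1])
  next
    fix a b c assume ab: "a \<in> {1..n}" "b \<in> {1..n}" "c \<in> {1..n}" "a \<noteq> b" "b \<noteq> c" "a \<noteq> c"
      and h: "\<sigma> \<subseteq> Kv v a b c"
    have "Kv v a b c = \<sigma>" by (rule mx[OF VR_K[OF vc ab] h])
    then have "\<exists>v \<in> cube_vertices n. \<exists>i0 \<in> {1..n}. \<exists>j0 \<in> {1..n}. \<exists>k0 \<in> {1..n}.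
            i0 \<noteq> j0 \<and> j0 \<noteq> k0 \<and> i0 \<noteq> k0 \<and> \<sigma> = Kv v i0 j0 k0"
      using vc ab by (intro bexI[of _ v] bexI[of _ a] bexI[of _ b] bexI[of _ c] conjI) auto
    then show ?thesis by (rule disjI2[OF disjI2])
  qed
qed

end
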